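(* The following hold. (1) For every $n\ge 0$, the standard simplex $\Delta^n$ is acyclic. (2) If $X$ is an acyclic simplicial set and $Y\subset X$ is a subsimplicial set, then $Y$ is acyclic. (3) If $\{X_i\}_{i\in I}$ is a family of acyclic simplicial sets, then the product $\prod_{i\in I}X_i$ is acyclic. Consequently (together with (2)), the class of acyclic simplicial sets is closed under all limits in the category of simplicial sets. (4) If $\{X_i\}_{i\in I}$ is a family of acyclic simplicial sets, then the coproduct $\coprod_{i\in I}X_i$ is acyclic. (5) Let $X,Y,Z$ be simplicial sets with $Y$ and $Z$ acyclic, and let $f\colon X\to Y$ and $g\colon X\to Z$ be morphisms. Then the double mapping cylinder $Y\coprod_{X\times\{0\}}(X\times\Delta^1)\coprod_{X\times\{1\}}Z$ (glued along $f$ on $X\times\{0\}$ and along $g$ on $X\times\{1\}$) is acyclic. (6) If $X=\operatorname{colim}_{i\in I}X_i$ is a filtered colimit of simplicial sets and every $X_i$ is acyclic, then $X$ is acyclic.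
   Context: A (directed) graph is $G=(V,E,s,t)$ with sets $V,E$ and maps $s,t\colon E\to V$. A trail is a finite sequence $(e_1,\dots,e_n)$ of edges with $n\ge 1$ and $t(e_i)=s(e_{i+1})$ for $1\le i\le n-1$; it is closed if $s(e_1)=t(e_n)$. A graph is acyclic if it has no closed trail. For a simplicial set $X$, its associated graph $G_X$ has vertex set $X_0$, edge set the set of non-degenerate $1$-simplices of $X$, source $d_1$ and target $d_0$. A simplicial set $X$ is called acyclic if $G_X$ is acyclic (this is a purely combinatorial notion, unrelated to homology). *)

theory Defs
  imports Main "HOL-Library.FuncSet"
begin

definition closed_trail :: "'e set \<Rightarrow> ('e \<Rightarrow> 'v) \<Rightarrow> ('e \<Rightarrow> 'v) \<Rightarrow> 'e list \<Rightarrow> bool" where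
  "closed_trail E src tgt es \<longleftrightarrow>
     es \<noteq> [] \<and> set es \<subseteq> E \<and>
     (\<forall>i. Suc i < length es \<longrightarrow> tgt (es ! i) = src (es ! Suc i)) \<and>
     src (hd es) = tgt (last es)"

definition graph_acyclic :: "'v set \<Rightarrow> 'e set \<Rightarrow> ('e \<Rightarrow> 'v) \<Rightarrow> ('e \<Rightarrow> 'v) \<Rightarrow> bool" where
  "graph_acyclic V E src tgt \<longleftrightarrow> \<not> (\<exists>es. closed_trail E src tgt es)"

text \<open>A morphism [m] \<rightarrow> [n] of \<Delta> is represented by the list of its values
  (a sorted list of length m+1 with entries \<le> n).\<close>

definition mono_map :: "nat \<Rightarrow> nat \<Rightarrow> nat list \<Rightarrow> bool" where
  "mono_map m n \<theta> \<longleftrightarrow> length \<theta> = Suc m \<and> sorted \<theta> \<and> (\<forall>j\<in>set \<theta>. j \<le> n)"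

text \<open>dcomp \<theta> \<psi> is the composite \<theta> \<circ> \<psi> (first \<psi>, then \<theta>).\<close>
definition dcomp :: "nat list \<Rightarrow> nat list \<Rightarrow> nat list" where
  "dcomp \<theta> \<psi> = map (\<lambda>j. \<theta> ! j) \<psi>"

text \<open>A simplicial set: sets of n-simplices cells n, and for x an n-simplex and
  \<theta> : [m] \<rightarrow> [n] the simplicial operator act n \<theta> x (an m-simplex).\<close>

record 'a sset =
  cells :: "nat \<Rightarrow> 'a set"
  act :: "nat \<Rightarrow> nat list \<Rightarrow> 'a \<Rightarrow> 'a"

definition is_sset :: "'a sset \<Rightarrow> bool" where
  "is_sset X \<longleftrightarrow>
     (\<forall>n m \<theta> x. mono_map m n \<theta> \<and> x \<in> cells X n \<longrightarrow> act X n \<theta> x \<in> cells X m) \<and>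
     (\<forall>n x. x \<in> cells X n \<longrightarrow> act X n [0..<Suc n] x = x) \<and>
     (\<forall>n m k \<theta> \<psi> x. mono_map m n \<theta> \<and> mono_map k m \<psi> \<and> x \<in> cells X n \<longrightarrow>
        act X m \<psi> (act X n \<theta> x) = act X n (dcomp \<theta> \<psi>) x)"

definition sset_hom :: "'a sset \<Rightarrow> 'b sset \<Rightarrow> (nat \<Rightarrow> 'a \<Rightarrow> 'b) \<Rightarrow> bool" where
  "sset_hom X Y f \<longleftrightarrow>
     (\<forall>n x. x \<in> cells X n \<longrightarrow> f n x \<in> cells Y n) \<and>
     (\<forall>n m \<theta> x. mono_map m n \<theta> \<and> x \<in> cells X n \<longrightarrow>
        f m (act X n \<theta> x) = act Y n \<theta> (f n x))"

definition sub_sset :: "'a sset \<Rightarrow> 'a sset \<Rightarrow> bool" where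
  "sub_sset Y X \<longleftrightarrow>
     (\<forall>n. cells Y n \<subseteq> cells X n) \<and>
     (\<forall>n m \<theta> y. mono_map m n \<theta> \<and> y \<in> cells Y n \<longrightarrow>
        act X n \<theta> y \<in> cells Y m \<and> act Y n \<theta> y = act X n \<theta> y)"

text \<open>Degeneracy s_0 : X_0 \<rightarrow> X_1 is induced by [1] \<rightarrow> [0] = [0,0];
  d_1 by [0] \<rightarrow> [1] = [0] and d_0 by [0] \<rightarrow> [1] = [1].\<close>

definition nondeg_edges :: "'a sset \<Rightarrow> 'a set" where
  "nondeg_edges X = cells X 1 - act X 0 [0, 0] ` cells X 0"

definition sset_acyclic :: "'a sset \<Rightarrow> bool" where
  "sset_acyclic X \<longleftrightarrow> graph_acyclic (cells X 0) (nondeg_edges X) (act X 1 [0]) (act X 1 [1])"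

definition stdsimplex :: "nat \<Rightarrow> nat list sset" where
  "stdsimplex n = \<lparr> cells = (\<lambda>m. {\<theta>. mono_map m n \<theta>}), act = (\<lambda>m \<psi> \<theta>. dcomp \<theta> \<psi>) \<rparr>"

definition prod_sset :: "'i set \<Rightarrow> ('i \<Rightarrow> 'a sset) \<Rightarrow> ('i \<Rightarrow> 'a) sset" where
  "prod_sset I X = \<lparr> cells = (\<lambda>n. PiE I (\<lambda>i. cells (X i) n)),
                     act = (\<lambda>n \<theta> f. restrict (\<lambda>i. act (X i) n \<theta> (f i)) I) \<rparr>"

definition coprod_sset :: "'i set \<Rightarrow> ('i \<Rightarrow> 'a sset) \<Rightarrow> ('i \<times> 'a) sset" where
  "coprod_sset I X = \<lparr> cells = (\<lambda>n. Sigma I (\<lambda>i. cells (X i) n)),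
                       act = (\<lambda>n \<theta> p. (fst p, act (X (fst p)) n \<theta> (snd p))) \<rparr>"

definition prod2_sset :: "'a sset \<Rightarrow> 'b sset \<Rightarrow> ('a \<times> 'b) sset" where
  "prod2_sset X Y = \<lparr> cells = (\<lambda>n. cells X n \<times> cells Y n),
                      act = (\<lambda>n \<theta> p. (act X n \<theta> (fst p), act Y n \<theta> (snd p))) \<rparr>"

definition coprod2_sset :: "'a sset \<Rightarrow> 'b sset \<Rightarrow> ('a + 'b) sset" where
  "coprod2_sset X Y = \<lparr> cells = (\<lambda>n. Inl ` cells X n \<union> Inr ` cells Y n),
                        act = (\<lambda>n \<theta> p. case p of Inl x \<Rightarrow> Inl (act X n \<theta> x)
                                                | Inr y \<Rightarrow> Inr (act Y n \<theta> y)) \<rparr>"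

definition equiv_closure_on :: "'a set \<Rightarrow> ('a \<times> 'a) set \<Rightarrow> ('a \<times> 'a) set" where
  "equiv_closure_on S r = Id_on S \<union> (r \<union> r\<inverse>)\<^sup>+"

definition quot_sset :: "'a sset \<Rightarrow> (nat \<Rightarrow> ('a \<times> 'a) set) \<Rightarrow> 'a set sset" where
  "quot_sset W R = \<lparr> cells = (\<lambda>n. cells W n // equiv_closure_on (cells W n) (R n)),
     act = (\<lambda>n \<theta> c. equiv_closure_on (cells W (length \<theta> - 1)) (R (length \<theta> - 1))
                        `` {act W n \<theta> (SOME x. x \<in> c)}) \<rparr>"

text \<open>Double mapping cylinder Y \<union>_{X\<times>{0}} (X \<times> \<Delta>^1) \<union>_{X\<times>{1}} Z
  of f : X \<rightarrow> Y and g : X \<rightarrow> Z.\<close>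

definition dmcyl_sset :: "'x sset \<Rightarrow> 'y sset \<Rightarrow> 'z sset \<Rightarrow> (nat \<Rightarrow> 'x \<Rightarrow> 'y) \<Rightarrow> (nat \<Rightarrow> 'x \<Rightarrow> 'z)
     \<Rightarrow> ('y + ('x \<times> nat list) + 'z) set sset" where
  "dmcyl_sset X Y Z f g =
     quot_sset (coprod2_sset Y (coprod2_sset (prod2_sset X (stdsimplex 1)) Z))
       (\<lambda>n. {(Inr (Inl (x, replicate (Suc n) 0)), Inl (f n x)) | x. x \<in> cells X n}
          \<union> {(Inr (Inl (x, replicate (Suc n) 1)), Inr (Inr (g n x))) | x. x \<in> cells X n})"

record ('o, 'm) small_cat =
  c_obj :: "'o set"
  c_arr :: "'m set"
  c_dom :: "'m \<Rightarrow> 'o"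
  c_cod :: "'m \<Rightarrow> 'o"
  c_id :: "'o \<Rightarrow> 'm"
  c_comp :: "'m \<Rightarrow> 'm \<Rightarrow> 'm"  \<comment> \<open>c_comp v u = v \<circ> u\<close>

definition is_cat :: "('o, 'm) small_cat \<Rightarrow> bool" where
  "is_cat C \<longleftrightarrow>
     (\<forall>u\<in>c_arr C. c_dom C u \<in> c_obj C \<and> c_cod C u \<in> c_obj C) \<and>
     (\<forall>i\<in>c_obj C. c_id C i \<in> c_arr C \<and> c_dom C (c_id C i) = i \<and> c_cod C (c_id C i) = i) \<and>
     (\<forall>u\<in>c_arr C. \<forall>v\<in>c_arr C. c_cod C u = c_dom C v \<longrightarrow>
        c_comp C v u \<in> c_arr C \<and> c_dom C (c_comp C v u) = c_dom C u \<and>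
        c_cod C (c_comp C v u) = c_cod C v) \<and>
     (\<forall>u\<in>c_arr C. c_comp C u (c_id C (c_dom C u)) = u \<and> c_comp C (c_id C (c_cod C u)) u = u) \<and>
     (\<forall>u\<in>c_arr C. \<forall>v\<in>c_arr C. \<forall>w\<in>c_arr C. c_cod C u = c_dom C v \<and> c_cod C v = c_dom C w \<longrightarrow>
        c_comp C w (c_comp C v u) = c_comp C (c_comp C w v) u)"

definition filtered_cat :: "('o, 'm) small_cat \<Rightarrow> bool" where
  "filtered_cat C \<longleftrightarrow>
     c_obj C \<noteq> {} \<and>
     (\<forall>i\<in>c_obj C. \<forall>j\<in>c_obj C. \<exists>k\<in>c_obj C. \<exists>u\<in>c_arr C. \<exists>v\<in>c_arr C.
        c_dom C u = i \<and> c_cod C u = k \<and> c_dom C v = j \<and> c_cod C v = k) \<and>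
     (\<forall>u\<in>c_arr C. \<forall>v\<in>c_arr C. c_dom C u = c_dom C v \<and> c_cod C u = c_cod C v \<longrightarrow>
        (\<exists>w\<in>c_arr C. c_dom C w = c_cod C u \<and> c_comp C w u = c_comp C w v))"

definition sset_diagram :: "('o, 'm) small_cat \<Rightarrow> ('o \<Rightarrow> 'a sset) \<Rightarrow> ('m \<Rightarrow> nat \<Rightarrow> 'a \<Rightarrow> 'a) \<Rightarrow> bool" where
  "sset_diagram C D F \<longleftrightarrow>
     (\<forall>i\<in>c_obj C. is_sset (D i)) \<and>
     (\<forall>u\<in>c_arr C. sset_hom (D (c_dom C u)) (D (c_cod C u)) (F u)) \<and>
     (\<forall>i\<in>c_obj C. \<forall>n x. x \<in> cells (D i) n \<longrightarrow> F (c_id C i) n x = x) \<and>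
     (\<forall>u\<in>c_arr C. \<forall>v\<in>c_arr C. c_cod C u = c_dom C v \<longrightarrow>
        (\<forall>n x. x \<in> cells (D (c_dom C u)) n \<longrightarrow> F (c_comp C v u) n x = F v n (F u n x)))"

definition lim_sset :: "('o, 'm) small_cat \<Rightarrow> ('o \<Rightarrow> 'a sset) \<Rightarrow> ('m \<Rightarrow> nat \<Rightarrow> 'a \<Rightarrow> 'a) \<Rightarrow> ('o \<Rightarrow> 'a) sset" where
  "lim_sset C D F = \<lparr> cells = (\<lambda>n. {s \<in> cells (prod_sset (c_obj C) D) n.
                                      \<forall>u\<in>c_arr C. F u n (s (c_dom C u)) = s (c_cod C u)}),
                      act = act (prod_sset (c_obj C) D) \<rparr>"

definition colim_sset :: "('o, 'm) small_cat \<Rightarrow> ('o \<Rightarrow> 'a sset) \<Rightarrow> ('m \<Rightarrow> nat \<Rightarrow> 'a \<Rightarrow> 'a) \<Rightarrow> ('o \<times> 'a) set sset" where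
  "colim_sset C D F = quot_sset (coprod_sset (c_obj C) D)
     (\<lambda>n. {((c_dom C u, x), (c_cod C u, F u n x)) | u x. u \<in> c_arr C \<and> x \<in> cells (D (c_dom C u)) n})"

end

theory Submission
  imports Defs
begin


definition grel :: "'e set \<Rightarrow> ('e \<Rightarrow> 'v) \<Rightarrow> ('e \<Rightarrow> 'v) \<Rightarrow> ('v \<times> 'v) set" where
  "grel E s t = {(s e, t e) | e. e \<in> E}"

lemma trail_trancl:
  "es \<noteq> [] \<Longrightarrow> set es \<subseteq> E \<Longrightarrow> (\<forall>i. Suc i < length es \<longrightarrow> t (es ! i) = s (es ! Suc i))
   \<Longrightarrow> (s (hd es), t (last es)) \<in> (grel E s t)\<^sup>+"
proof (induction es)
  case Nil then show ?case by simp
next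
  case (Cons e es)
  have e: "(s e, t e) \<in> grel E s t" using Cons.prems by (auto simp: grel_def)
  show ?case
  proof (cases "es = []")
    case True then show ?thesis using e by simp
  next
    case False
    have "t e = s (hd es)" using Cons.prems(3)[rule_format, of 0] False by (simp add: hd_conv_nth)
    moreover have "(s (hd es), t (last es)) \<in> (grel E s t)\<^sup>+"
      using Cons.IH[OF False] Cons.prems by force
    ultimately show ?thesis using e False by (simp add: trancl_into_trancl2)
  qed
qed

lemma trancl_trail:
  assumes "(a, b) \<in> (grel E s t)\<^sup>+"
  shows "\<exists>es. es \<noteq> [] \<and> set es \<subseteq> E \<and> (\<forall>i. Suc i < length es \<longrightarrow> t (es ! i) = s (es ! Suc i))
     \<and> s (hd es) = a \<and> t (last es) = b"
  using assms
proof (induction rule: converse_trancl_induct)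
  case (base y)
  then obtain e where "e \<in> E" "y = s e" "b = t e" by (auto simp: grel_def)
  then show ?case by (intro exI[of _ "[e]"]) auto
next
  case (step y z)
  then obtain e where e: "e \<in> E" "y = s e" "z = t e" by (auto simp: grel_def)
  from step obtain es where es: "es \<noteq> []" "set es \<subseteq> E"
    "\<forall>i. Suc i < length es \<longrightarrow> t (es ! i) = s (es ! Suc i)" "s (hd es) = z" "t (last es) = b" by blast
  show ?case
  proof (intro exI[of _ "e # es"] conjI allI impI)
    fix i assume "Suc i < length (e # es)"
    then show "t ((e # es) ! i) = s ((e # es) ! Suc i)"
      using es e by (cases i) (auto simp: hd_conv_nth)
  qed (use es e in auto)
qed

lemma graph_acyclic_iff: "graph_acyclic V E src tgt \<longleftrightarrow> (\<forall>v. (v, v) \<notin> (grel E src tgt)\<^sup>+)"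
  unfolding graph_acyclic_def closed_trail_def
proof
  assume h: "\<not> (\<exists>es. es \<noteq> [] \<and> set es \<subseteq> E \<and>
          (\<forall>i. Suc i < length es \<longrightarrow> tgt (es ! i) = src (es ! Suc i)) \<and> src (hd es) = tgt (last es))"
  show "\<forall>v. (v, v) \<notin> (grel E src tgt)\<^sup>+"
  proof (intro allI notI)
    fix v assume "(v, v) \<in> (grel E src tgt)\<^sup>+"
    from trancl_trail[OF this] h show False by auto
  qed
next
  assume h: "\<forall>v. (v, v) \<notin> (grel E src tgt)\<^sup>+"
  show "\<not> (\<exists>es. es \<noteq> [] \<and> set es \<subseteq> E \<and>
          (\<forall>i. Suc i < length es \<longrightarrow> tgt (es ! i) = src (es ! Suc i)) \<and> src (hd es) = tgt (last es))"
  proof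
    assume "\<exists>es. es \<noteq> [] \<and> set es \<subseteq> E \<and>
          (\<forall>i. Suc i < length es \<longrightarrow> tgt (es ! i) = src (es ! Suc i)) \<and> src (hd es) = tgt (last es)"
    then obtain es where es: "es \<noteq> []" "set es \<subseteq> E"
          "\<forall>i. Suc i < length es \<longrightarrow> tgt (es ! i) = src (es ! Suc i)" "src (hd es) = tgt (last es)" by blast
    from trail_trancl[OF es(1-3)] es(4) h show False by simp
  qed
qed

definition erel :: "'a sset \<Rightarrow> ('a \<times> 'a) set" where
  "erel X = {(act X 1 [0] e, act X 1 [1] e) | e. e \<in> nondeg_edges X}"

definition arel :: "'a sset \<Rightarrow> ('a \<times> 'a) set" where
  "arel X = {(act X 1 [0] e, act X 1 [1] e) | e. e \<in> cells X 1}"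

lemma acyc_iff: "sset_acyclic X \<longleftrightarrow> (\<forall>v. (v, v) \<notin> (erel X)\<^sup>+)"
  unfolding sset_acyclic_def graph_acyclic_iff erel_def grel_def by simp

lemma mm00: "mono_map 1 0 [0,0]" by (simp add: mono_map_def)
lemma mm0: "mono_map 0 1 [0]" by (simp add: mono_map_def)
lemma mm1: "mono_map 0 1 [Suc 0]" by (simp add: mono_map_def)

lemma sset_face_degen:
  assumes "is_sset X" "v \<in> cells X 0"
  shows "act X 1 [0] (act X 0 [0,0] v) = v" "act X 1 [1] (act X 0 [0,0] v) = v"
proof -
  have u: "[0..<Suc 0] = [0]" by simp
  have id: "act X 0 [0] v = v" using assms u unfolding is_sset_def by metis
  show "act X 1 [0] (act X 0 [0,0] v) = v"
    using assms mm00 mm0 id unfolding is_sset_def by (auto simp: dcomp_def)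
  show "act X 1 [1] (act X 0 [0,0] v) = v"
    using assms mm00 mm1 id unfolding is_sset_def by (auto simp: dcomp_def)
qed

lemma arel_sub: "is_sset X \<Longrightarrow> arel X \<subseteq> (erel X)\<^sup>="
  unfolding arel_def erel_def nondeg_edges_def using sset_face_degen by fastforce

lemma arel_rtrancl: "is_sset X \<Longrightarrow> (arel X)\<^sup>* = (erel X)\<^sup>*"
proof
  assume "is_sset X"
  then show "(arel X)\<^sup>* \<subseteq> (erel X)\<^sup>*"
    by (metis arel_sub rtrancl_mono rtrancl_reflcl)
next
  show "(erel X)\<^sup>* \<subseteq> (arel X)\<^sup>*"
    by (rule rtrancl_mono) (auto simp: arel_def erel_def nondeg_edges_def)
qed

lemma acyc_iff2: "is_sset X \<Longrightarrow> sset_acyclic X \<longleftrightarrow>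
   (\<forall>e \<in> nondeg_edges X. (act X 1 [1] e, act X 1 [0] e) \<notin> (arel X)\<^sup>*)"
  unfolding acyc_iff arel_rtrancl
  by (auto simp: erel_def trancl_unfold_left) 


lemma acyc_from_rel:
  assumes "erel X \<subseteq> r\<^sup>+" "\<forall>v. (v, v) \<notin> r\<^sup>+"
  shows "sset_acyclic X"
proof -
  have "(erel X)\<^sup>+ \<subseteq> r\<^sup>+"
  proof
    fix p assume "p \<in> (erel X)\<^sup>+"
    then have "p \<in> (r\<^sup>+)\<^sup>+" using assms(1) by (rule trancl_mono)
    then show "p \<in> r\<^sup>+" by simp
  qed
  then show ?thesis using assms(2) acyc_iff by blast
qed

lemma mono_map_1:
  assumes "mono_map 1 n e" shows "\<exists>a b. e = [a, b] \<and> a \<le> b \<and> b \<le> n"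
proof -
  from assms have "length e = 2" "sorted e" "\<forall>j\<in>set e. j \<le> n" by (auto simp: mono_map_def)
  then show ?thesis
    by (cases e; cases "tl e"; auto simp: numeral_2_eq_2)
qed

definition hdlt :: "(nat list \<times> nat list) set" where "hdlt = {(x, y). hd x < hd y}"

lemma part1: "sset_acyclic (stdsimplex n)"
proof (rule acyc_from_rel[where r = hdlt])
  show "erel (stdsimplex n) \<subseteq> hdlt\<^sup>+"
  proof
    fix p assume "p \<in> erel (stdsimplex n)"
    then obtain e where p: "p = (dcomp e [0], dcomp e [1])" and e: "mono_map 1 n e"
      and nd: "e \<notin> (\<lambda>v. dcomp v [0,0]) ` {v. mono_map 0 n v}"
      by (auto simp: erel_def nondeg_edges_def stdsimplex_def)
    from mono_map_1[OF e] obtain a b where ab: "e = [a, b]" "a \<le> b" "b \<le> n" by blast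
    have "a \<noteq> b"
    proof
      assume "a = b"
      then have "e = dcomp [a] [0,0]" "mono_map 0 n [a]" using ab by (auto simp: dcomp_def mono_map_def)
      then show False using nd by blast
    qed
    then show "p \<in> hdlt\<^sup>+" using p ab by (auto simp: dcomp_def hdlt_def)
  qed
next
  have "trans hdlt" by (auto simp: trans_def hdlt_def)
  then show "\<forall>v. (v, v) \<notin> hdlt\<^sup>+" by (simp add: hdlt_def)
qed

lemma sub_nondeg:
  assumes "is_sset X" "sub_sset Y X"
  shows "erel Y \<subseteq> erel X"
proof
  fix p assume "p \<in> erel Y"
  then obtain e where p: "p = (act Y 1 [0] e, act Y 1 [1] e)" and e: "e \<in> cells Y 1"
    and nd: "e \<notin> act Y 0 [0,0] ` cells Y 0" by (auto simp: erel_def nondeg_edges_def)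
  have eX: "e \<in> cells X 1" using e assms(2) by (auto simp: sub_sset_def)
  have a: "act Y 1 [0] e = act X 1 [0] e" "act Y 1 [1] e = act X 1 [1] e"
    using assms(2) e mm0 mm1 by (auto simp: sub_sset_def)
  have "e \<notin> act X 0 [0,0] ` cells X 0"
  proof
    assume "e \<in> act X 0 [0,0] ` cells X 0"
    then obtain v where v: "v \<in> cells X 0" "e = act X 0 [0,0] v" by blast
    then have "v = act X 1 [0] e" using sset_face_degen[OF assms(1) v(1)] by simp
    then have vY: "v \<in> cells Y 0" using assms(2) e mm0 by (auto simp: sub_sset_def)
    then have "act Y 0 [0,0] v = e" using assms(2) mm00 v by (auto simp: sub_sset_def)
    then show False using nd vY by blast
  qed
  then show "p \<in> erel X" using p a eX by (auto simp: erel_def nondeg_edges_def)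
qed

lemma part2: "is_sset X \<Longrightarrow> sset_acyclic X \<Longrightarrow> sub_sset Y X \<Longrightarrow> sset_acyclic Y"
proof -
  assume a: "is_sset X" "sset_acyclic X" "sub_sset Y X"
  have "erel Y \<subseteq> (erel X)\<^sup>+" using sub_nondeg[OF a(1,3)] by auto
  then show ?thesis using a(2) acyc_iff[of X] acyc_from_rel by blast
qed

lemma prod_step:
  assumes "(a, b) \<in> arel (prod_sset I X)" "i \<in> I"
  shows "(a i, b i) \<in> arel (X i)"
  using assms by (auto simp: arel_def prod_sset_def)

lemma prod_rtrancl:
  assumes "(a, b) \<in> (arel (prod_sset I X))\<^sup>*" "i \<in> I"
  shows "(a i, b i) \<in> (arel (X i))\<^sup>*"
  using assms(1)
proof (induction rule: rtrancl_induct)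
  case base then show ?case by simp
next
  case (step y z)
  then show ?case using prod_step[OF step(2) assms(2)] by (meson rtrancl.rtrancl_into_rtrancl)
qed

lemma prod_nondeg:
  assumes "\<forall>i\<in>I. is_sset (X i)" "e \<in> nondeg_edges (prod_sset I X)"
  shows "\<exists>i\<in>I. e i \<in> nondeg_edges (X i)"
proof (rule ccontr)
  assume nn: "\<not> (\<exists>i\<in>I. e i \<in> nondeg_edges (X i))"
  have eP: "e \<in> PiE I (\<lambda>i. cells (X i) 1)" using assms(2) by (auto simp: nondeg_edges_def prod_sset_def)
  then have "\<forall>i\<in>I. e i \<in> act (X i) 0 [0,0] ` cells (X i) 0"
    using nn by (auto simp: nondeg_edges_def)
  then have "\<forall>i\<in>I. \<exists>v. v \<in> cells (X i) 0 \<and> e i = act (X i) 0 [0,0] v" by blast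
  then obtain v where v: "\<forall>i\<in>I. v i \<in> cells (X i) 0 \<and> e i = act (X i) 0 [0,0] (v i)" by metis
  let ?v = "restrict v I"
  have "?v \<in> cells (prod_sset I X) 0" using v by (auto simp: prod_sset_def)
  moreover have "act (prod_sset I X) 0 [0,0] ?v = e"
    using v eP by (auto simp: prod_sset_def PiE_def extensional_def)
  ultimately show False using assms(2) by (auto simp: nondeg_edges_def)
qed

lemma part3:
  assumes "\<forall>i\<in>I. is_sset (X i) \<and> sset_acyclic (X i)"
  shows "sset_acyclic (prod_sset I X)"
proof -
  have "(v, v) \<notin> (erel (prod_sset I X))\<^sup>+" for v
  proof
    assume "(v, v) \<in> (erel (prod_sset I X))\<^sup>+"
    then obtain w where vw: "(v, w) \<in> erel (prod_sset I X)" "(w, v) \<in> (erel (prod_sset I X))\<^sup>*"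
      using tranclD by metis
    then obtain e where e: "e \<in> nondeg_edges (prod_sset I X)"
      "v = act (prod_sset I X) 1 [0] e" "w = act (prod_sset I X) 1 [1] e" 
      using vw(1) unfolding erel_def by blast
    have "\<forall>i\<in>I. is_sset (X i)" using assms by blast
    from prod_nondeg[OF this e(1)] obtain i where i: "i \<in> I" "e i \<in> nondeg_edges (X i)" by blast
    have sub: "erel (prod_sset I X) \<subseteq> arel (prod_sset I X)"
      by (auto simp: erel_def arel_def nondeg_edges_def)
    have "(w, v) \<in> (arel (prod_sset I X))\<^sup>*" using vw(2) rtrancl_mono[OF sub] by blast
    then have wv: "(w i, v i) \<in> (arel (X i))\<^sup>*" using i(1) by (rule prod_rtrancl)
    have "w i = act (X i) 1 [1] (e i)" "v i = act (X i) 1 [0] (e i)"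
      using e i by (auto simp: prod_sset_def)
    then have "(act (X i) 1 [1] (e i), act (X i) 1 [0] (e i)) \<in> (arel (X i))\<^sup>*" using wv by simp
    moreover have "sset_acyclic (X i)" "is_sset (X i)" using assms i by auto
    ultimately show False using acyc_iff2[of "X i"] i(2) by blast
  qed
  then show ?thesis using acyc_iff by blast
qed

lemma lim_nondeg:
  assumes "is_cat C" "sset_diagram C D F"
  shows "erel (lim_sset C D F) \<subseteq> erel (prod_sset (c_obj C) D)"
proof
  fix p assume "p \<in> erel (lim_sset C D F)"
  then obtain e where p: "p = (act (lim_sset C D F) 1 [0] e, act (lim_sset C D F) 1 [1] e)"
    and e: "e \<in> cells (lim_sset C D F) 1"
    and nd: "e \<notin> act (lim_sset C D F) 0 [0,0] ` cells (lim_sset C D F) 0"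
    by (auto simp: erel_def nondeg_edges_def)
  have eP: "e \<in> cells (prod_sset (c_obj C) D) 1" using e by (auto simp: lim_sset_def)
  have "e \<notin> act (prod_sset (c_obj C) D) 0 [0,0] ` cells (prod_sset (c_obj C) D) 0"
  proof
    assume "e \<in> act (prod_sset (c_obj C) D) 0 [0,0] ` cells (prod_sset (c_obj C) D) 0"
    then obtain v where v: "v \<in> cells (prod_sset (c_obj C) D) 0"
      "e = act (prod_sset (c_obj C) D) 0 [0,0] v" by blast
    have vP: "v \<in> PiE (c_obj C) (\<lambda>i. cells (D i) 0)" using v by (auto simp: prod_sset_def)
    have ss: "\<forall>i\<in>c_obj C. is_sset (D i)" using assms(2) by (auto simp: sset_diagram_def)
    have ei: "\<forall>i\<in>c_obj C. e i = act (D i) 0 [0,0] (v i)" using v by (auto simp: prod_sset_def)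
    have vi: "\<forall>i\<in>c_obj C. v i = act (D i) 1 [0] (e i)"
    proof
      fix i assume i: "i \<in> c_obj C"
      have "v i \<in> cells (D i) 0" using vP i by auto
      then show "v i = act (D i) 1 [0] (e i)" using sset_face_degen(1)[of "D i" "v i"] ss i ei by simp
    qed
    have "\<forall>u\<in>c_arr C. F u 0 (v (c_dom C u)) = v (c_cod C u)"
    proof
      fix u assume u: "u \<in> c_arr C"
      have dc: "c_dom C u \<in> c_obj C" "c_cod C u \<in> c_obj C" using assms(1) u by (auto simp: is_cat_def)
      have hom: "sset_hom (D (c_dom C u)) (D (c_cod C u)) (F u)" using assms(2) u by (auto simp: sset_diagram_def)
      have ed: "e (c_dom C u) \<in> cells (D (c_dom C u)) 1" using eP dc by (auto simp: prod_sset_def)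
      have "F u 1 (e (c_dom C u)) = e (c_cod C u)" using e u by (auto simp: lim_sset_def)
      have "F u 0 (act (D (c_dom C u)) 1 [0] (e (c_dom C u))) = act (D (c_cod C u)) 1 [0] (F u 1 (e (c_dom C u)))"
        using hom ed mm0 unfolding sset_hom_def by blast
      then show "F u 0 (v (c_dom C u)) = v (c_cod C u)"
        using vi dc \<open>F u 1 (e (c_dom C u)) = e (c_cod C u)\<close> by simp
    qed
    then have "v \<in> cells (lim_sset C D F) 0" using v by (auto simp: lim_sset_def)
    moreover have "act (lim_sset C D F) 0 = act (prod_sset (c_obj C) D) 0" by (simp add: lim_sset_def)
    ultimately show False using nd v by auto
  qed
  then show "p \<in> erel (prod_sset (c_obj C) D)" using p eP
    by (auto simp: erel_def nondeg_edges_def lim_sset_def)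
qed

lemma part_lim:
  assumes "is_cat C" "sset_diagram C D F" "\<forall>i\<in>c_obj C. sset_acyclic (D i)"
  shows "sset_acyclic (lim_sset C D F)"
proof -
  have "sset_acyclic (prod_sset (c_obj C) D)"
    using assms by (intro part3) (auto simp: sset_diagram_def)
  moreover have "erel (lim_sset C D F) \<subseteq> (erel (prod_sset (c_obj C) D))\<^sup>+"
    using lim_nondeg[OF assms(1,2)] by auto
  ultimately show ?thesis using acyc_iff acyc_from_rel by blast
qed

lemma coprod_erel:
  assumes "(p, q) \<in> erel (coprod_sset I X)"
  shows "fst p = fst q \<and> fst p \<in> I \<and> (snd p, snd q) \<in> erel (X (fst p))"
proof -
  from assms obtain e where e: "e \<in> nondeg_edges (coprod_sset I X)"
    "p = act (coprod_sset I X) 1 [0] e" "q = act (coprod_sset I X) 1 [1] e" by (auto simp: erel_def)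
  obtain i x where ix: "e = (i, x)" by force
  have "i \<in> I" "x \<in> cells (X i) 1" using e ix by (auto simp: nondeg_edges_def coprod_sset_def)
  moreover have "x \<notin> act (X i) 0 [0,0] ` cells (X i) 0"
  proof
    assume "x \<in> act (X i) 0 [0,0] ` cells (X i) 0"
    then obtain v where "v \<in> cells (X i) 0" "x = act (X i) 0 [0,0] v" by blast
    then have "e = act (coprod_sset I X) 0 [0,0] (i, v)" "(i, v) \<in> cells (coprod_sset I X) 0"
      using ix \<open>i \<in> I\<close> by (auto simp: coprod_sset_def)
    then show False using e(1) by (auto simp: nondeg_edges_def)
  qed
  ultimately show ?thesis using e ix by (auto simp: erel_def nondeg_edges_def coprod_sset_def)
qed

lemma coprod_trancl:
  assumes "(p, q) \<in> (erel (coprod_sset I X))\<^sup>+"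
  shows "fst p = fst q \<and> (snd p, snd q) \<in> (erel (X (fst p)))\<^sup>+"
  using assms
proof (induction rule: trancl_induct)
  case (base y)
  from coprod_erel[OF base] show ?case by auto
next
  case (step y z)
  from coprod_erel[OF step(2)] step(3) show ?case
    by (auto intro: trancl_into_trancl)
qed

lemma part4:
  assumes "\<forall>i\<in>I. is_sset (X i) \<and> sset_acyclic (X i)"
  shows "sset_acyclic (coprod_sset I X)"
proof -
  have "(v, v) \<notin> (erel (coprod_sset I X))\<^sup>+" for v
  proof
    assume a: "(v, v) \<in> (erel (coprod_sset I X))\<^sup>+"
    then obtain w where "(v, w) \<in> erel (coprod_sset I X)" using tranclD by metis
    from coprod_erel[OF this] have "fst v \<in> I" by blast
    then have "sset_acyclic (X (fst v))" using assms by simp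
    moreover have "(snd v, snd v) \<in> (erel (X (fst v)))\<^sup>+" using coprod_trancl[OF a] by simp
    ultimately show False unfolding acyc_iff by blast
  qed
  then show ?thesis unfolding acyc_iff by blast
qed



lemma ec_sub: "r \<subseteq> S \<times> S \<Longrightarrow> equiv_closure_on S r \<subseteq> S \<times> S"
proof -
  assume r: "r \<subseteq> S \<times> S"
  have "r \<union> r\<inverse> \<subseteq> S \<times> S" using r by auto
  then have "(r \<union> r\<inverse>)\<^sup>+ \<subseteq> S \<times> S" by (rule trancl_subset_Sigma)
  then show ?thesis unfolding equiv_closure_on_def by auto
qed

lemma ec_equiv: "r \<subseteq> S \<times> S \<Longrightarrow> equiv S (equiv_closure_on S r)"
proof -
  assume r: "r \<subseteq> S \<times> S"
  have sub: "equiv_closure_on S r \<subseteq> S \<times> S" using ec_sub[OF r] .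
  have "refl_on S (equiv_closure_on S r)" using sub unfolding refl_on_def equiv_closure_on_def by auto
  moreover have "sym (equiv_closure_on S r)"
  proof (rule symI)
    fix a b assume "(a, b) \<in> equiv_closure_on S r"
    then consider "(a, b) \<in> Id_on S" | "(a, b) \<in> (r \<union> r\<inverse>)\<^sup>+" unfolding equiv_closure_on_def by blast
    then show "(b, a) \<in> equiv_closure_on S r"
    proof cases
      case 1 then show ?thesis unfolding equiv_closure_on_def by auto
    next
      case 2
      then have "(b, a) \<in> ((r \<union> r\<inverse>)\<inverse>)\<^sup>+" by (simp add: trancl_converse)
      moreover have "(r \<union> r\<inverse>)\<inverse> = r \<union> r\<inverse>" by auto
      ultimately show ?thesis unfolding equiv_closure_on_def by auto
    qed
  qed
  moreover have "trans (equiv_closure_on S r)"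
  proof (rule transI)
    fix a b c assume "(a, b) \<in> equiv_closure_on S r" "(b, c) \<in> equiv_closure_on S r"
    then show "(a, c) \<in> equiv_closure_on S r" unfolding equiv_closure_on_def
      by (auto intro: trancl_trans)
  qed
  ultimately show ?thesis using sub by (simp add: equiv_def)
qed

lemma ec_gen: "r \<subseteq> equiv_closure_on S r"
  unfolding equiv_closure_on_def by auto

lemma ec_map:
  assumes "\<forall>x\<in>S. g x \<in> S'" "r' \<subseteq> S' \<times> S'"
    "\<forall>(a, b)\<in>r. (g a, g b) \<in> equiv_closure_on S' r'"
    "(a, b) \<in> equiv_closure_on S r"
  shows "(g a, g b) \<in> equiv_closure_on S' r'"
proof -
  have eq: "equiv S' (equiv_closure_on S' r')" using ec_equiv[OF assms(2)] .
  have sy: "sym (equiv_closure_on S' r')" and tr: "trans (equiv_closure_on S' r')"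
    using eq by (auto simp: equiv_def)
  have one: "(g x, g y) \<in> equiv_closure_on S' r'" if xy: "(x, y) \<in> r \<union> r\<inverse>" for x y
  proof -
    consider "(x, y) \<in> r" | "(y, x) \<in> r" using xy by blast
    then show ?thesis
    proof cases
      case 1 then show ?thesis using assms(3) by blast
    next
      case 2 then have "(g y, g x) \<in> equiv_closure_on S' r'" using assms(3) by blast
      then show ?thesis using sy by (meson symD)
    qed
  qed
  from assms(4) consider "(a, b) \<in> Id_on S" | "(a, b) \<in> (r \<union> r\<inverse>)\<^sup>+"
    unfolding equiv_closure_on_def by blast
  then show ?thesis
  proof cases
    case 1 then show ?thesis using assms(1) unfolding equiv_closure_on_def by auto
  next
    case 2
    then show ?thesis
    proof (induction rule: trancl_induct)
      case (base y)
      then show ?case using one by blast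
    next
      case (step y z)
      have "(g y, g z) \<in> equiv_closure_on S' r'" using step(2) one by blast
      then show ?case using step(3) tr by (meson transD)
    qed
  qed
qed

lemma ec_inv:
  assumes "\<forall>(a, b)\<in>r. \<phi> a = \<phi> b" "(a, b) \<in> equiv_closure_on S r"
  shows "\<phi> a = \<phi> b"
proof -
  from assms(2) consider "(a, b) \<in> Id_on S" | "(a, b) \<in> (r \<union> r\<inverse>)\<^sup>+"
    unfolding equiv_closure_on_def by blast
  then show ?thesis
  proof cases
    case 1 then show ?thesis by auto
  next
    case 2
    then show ?thesis
      by (induction rule: trancl_induct) (use assms(1) in auto)
  qed
qed

lemma some_in_class:
  assumes "r \<subseteq> S \<times> S" "w \<in> S"
  shows "(w, SOME x. x \<in> equiv_closure_on S r `` {w}) \<in> equiv_closure_on S r"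
proof -
  have "w \<in> equiv_closure_on S r `` {w}" using assms unfolding equiv_closure_on_def by auto
  then have "(SOME x. x \<in> equiv_closure_on S r `` {w}) \<in> equiv_closure_on S r `` {w}" by (rule someI)
  then show ?thesis by simp
qed

locale qsetup =
  fixes W :: "'a sset" and R :: "nat \<Rightarrow> ('a \<times> 'a) set"
  assumes HR: "\<And>n. R n \<subseteq> cells W n \<times> cells W n"
    and Hcells: "\<And>m n \<theta> x. mono_map m n \<theta> \<Longrightarrow> x \<in> cells W n \<Longrightarrow> act W n \<theta> x \<in> cells W m"
    and HRact: "\<And>m n \<theta> a b. mono_map m n \<theta> \<Longrightarrow> (a, b) \<in> R n \<Longrightarrow>
        (act W n \<theta> a, act W n \<theta> b) \<in> equiv_closure_on (cells W m) (R m)"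
begin

abbreviation "EE n \<equiv> equiv_closure_on (cells W n) (R n)"
abbreviation "Q \<equiv> quot_sset W R"

lemma EE_equiv: "equiv (cells W n) (EE n)" using ec_equiv[OF HR] .

lemma qact:
  assumes "mono_map m n \<theta>" "w \<in> cells W n"
  shows "act Q n \<theta> (EE n `` {w}) = EE m `` {act W n \<theta> w}"
proof -
  have len: "length \<theta> - 1 = m" using assms(1) by (simp add: mono_map_def)
  let ?x = "SOME x. x \<in> EE n `` {w}"
  have wx: "(w, ?x) \<in> EE n" using some_in_class[OF HR assms(2)] .
  have "(act W n \<theta> w, act W n \<theta> ?x) \<in> EE m"
    using ec_map[OF _ HR _ wx, of "act W n \<theta>"] Hcells[OF assms(1)] HRact[OF assms(1)] by blast
  then have "EE m `` {act W n \<theta> ?x} = EE m `` {act W n \<theta> w}"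
    using EE_equiv by (metis equiv_class_eq)
  then show ?thesis using len by (simp add: quot_sset_def)
qed

lemma qcells: "c \<in> cells Q n \<Longrightarrow> \<exists>w \<in> cells W n. c = EE n `` {w}"
  by (auto simp: quot_sset_def quotient_def)

lemma qcells2: "w \<in> cells W n \<Longrightarrow> EE n `` {w} \<in> cells Q n"
  by (auto simp: quot_sset_def quotient_def)

lemma qedge:
  assumes "(c0, c1) \<in> erel Q"
  shows "\<exists>w \<in> cells W 1. c0 = EE 0 `` {act W 1 [0] w} \<and> c1 = EE 0 `` {act W 1 [1] w}
           \<and> (\<forall>v \<in> cells W 0. (w, act W 0 [0,0] v) \<notin> EE 1)"
proof -
  from assms obtain c where c: "c \<in> cells Q 1" "c \<notin> act Q 0 [0,0] ` cells Q 0"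
    "c0 = act Q 1 [0] c" "c1 = act Q 1 [1] c" by (auto simp: erel_def nondeg_edges_def)
  from qcells[OF c(1)] obtain w where w: "w \<in> cells W 1" "c = EE 1 `` {w}" by blast
  have "(w, act W 0 [0,0] v) \<notin> EE 1" if v: "v \<in> cells W 0" for v
  proof
    assume h: "(w, act W 0 [0,0] v) \<in> EE 1"
    have "act Q 0 [0,0] (EE 0 `` {v}) = EE 1 `` {act W 0 [0,0] v}" using qact[OF mm00 v] .
    also have "\<dots> = c" using w(2) h EE_equiv by (metis equiv_class_eq)
    finally show False using c(2) qcells2[OF v] by blast
  qed
  then show ?thesis using c w qact[OF mm0 w(1)] qact[OF mm1 w(1)] by (intro bexI[OF _ w(1)]) auto
qed

lemma quot_acyclic:
  assumes inv: "\<forall>(a, b)\<in>R 0. \<phi> a = \<phi> b"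
    and T: "\<forall>v. (v, v) \<notin> T\<^sup>+"
    and E: "\<And>w. w \<in> cells W 1 \<Longrightarrow> (\<forall>v \<in> cells W 0. (w, act W 0 [0,0] v) \<notin> EE 1) \<Longrightarrow>
              (\<phi> (act W 1 [0] w), \<phi> (act W 1 [1] w)) \<in> T"
  shows "sset_acyclic Q"
proof -
  define h where "h c = \<phi> (SOME x. x \<in> c)" for c
  have hc: "h (EE 0 `` {u}) = \<phi> u" if "u \<in> cells W 0" for u
    using ec_inv[OF inv some_in_class[OF HR that]] unfolding h_def by simp
  have d: "act W 1 [0] w \<in> cells W 0" "act W 1 [1] w \<in> cells W 0" if "w \<in> cells W 1" for w
    using Hcells[OF mm0 that] Hcells[OF mm1 that] by auto
  have sub: "erel Q \<subseteq> inv_image T h"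
  proof
    fix p assume "p \<in> erel Q"
    then obtain c0 c1 where p: "p = (c0, c1)" "(c0, c1) \<in> erel Q" by (cases p) auto
    from qedge[OF p(2)] obtain w where w: "w \<in> cells W 1" "c0 = EE 0 `` {act W 1 [0] w}"
      "c1 = EE 0 `` {act W 1 [1] w}" "\<forall>v \<in> cells W 0. (w, act W 0 [0,0] v) \<notin> EE 1" by blast
    have "(\<phi> (act W 1 [0] w), \<phi> (act W 1 [1] w)) \<in> T" using E[OF w(1) w(4)] .
    then show "p \<in> inv_image T h" using p w hc d[OF w(1)] by (simp add: inv_image_def)
  qed
  have "(erel Q)\<^sup>+ \<subseteq> inv_image (T\<^sup>+) h"
  proof
    fix p assume "p \<in> (erel Q)\<^sup>+"
    then obtain a b where ab: "p = (a, b)" "(a, b) \<in> (erel Q)\<^sup>+" by (cases p) auto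
    from ab(2) have "(h a, h b) \<in> T\<^sup>+"
    proof (induction rule: trancl_induct)
      case (base y) then show ?case using sub by auto
    next
      case (step y z)
      then have "(h y, h z) \<in> T" using sub by auto
      with step(3) show ?case by (rule trancl_into_trancl)
    qed
    then show "p \<in> inv_image (T\<^sup>+) h" using ab by simp
  qed
  then show ?thesis using T unfolding acyc_iff by auto
qed

end


lemma dcomp_mono:
  assumes "mono_map n k l" "mono_map m n \<psi>"
  shows "mono_map m k (dcomp l \<psi>)"
proof -
  have l: "length l = Suc n" "sorted l" "\<forall>j\<in>set l. j \<le> k" using assms(1) by (auto simp: mono_map_def)
  have p: "length \<psi> = Suc m" "sorted \<psi>" "\<forall>j\<in>set \<psi>. j \<le> n" using assms(2) by (auto simp: mono_map_def)
  have lt: "\<psi> ! i < length l" if "i < length \<psi>" for i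
  proof -
    have "\<psi> ! i \<in> set \<psi>" using that by (rule nth_mem)
    then have "\<psi> ! i \<le> n" using p(3) by blast
    then show ?thesis using l(1) by simp
  qed
  have "sorted (map (\<lambda>j. l ! j) \<psi>)"
  proof (rule sorted_iff_nth_mono[THEN iffD2], intro allI impI)
    fix i j assume ij: "i \<le> j" "j < length (map (\<lambda>j. l ! j) \<psi>)"
    have jl: "j < length \<psi>" using ij by simp
    have "\<psi> ! i \<le> \<psi> ! j" using sorted_nth_mono[OF p(2) ij(1) jl] .
    moreover have "\<psi> ! j < length l" using lt jl by blast
    ultimately have "l ! (\<psi> ! i) \<le> l ! (\<psi> ! j)" using sorted_nth_mono[OF l(2)] by blast
    then show "map (\<lambda>j. l ! j) \<psi> ! i \<le> map (\<lambda>j. l ! j) \<psi> ! j" using ij by simp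
  qed
  moreover have "\<forall>j\<in>set (map (\<lambda>j. l ! j) \<psi>). j \<le> k"
  proof
    fix j assume "j \<in> set (map (\<lambda>j. l ! j) \<psi>)"
    then obtain i where i: "i \<in> set \<psi>" "j = l ! i" by auto
    then have "i \<le> n" using p(3) by blast
    then have "i < length l" using l(1) by simp
    then have "l ! i \<in> set l" by (rule nth_mem)
    then show "j \<le> k" using l(3) i(2) by blast
  qed
  ultimately show ?thesis using p(1) by (simp add: mono_map_def dcomp_def)
qed

lemma dcomp_rep:
  assumes "mono_map m n \<theta>"
  shows "dcomp (replicate (Suc n) a) \<theta> = replicate (Suc m) a"
proof -
  have "\<forall>j\<in>set \<theta>. j \<le> n" "length \<theta> = Suc m" using assms by (auto simp: mono_map_def)
  then show ?thesis unfolding dcomp_def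
  proof (intro nth_equalityI)
    fix i assume a: "\<forall>j\<in>set \<theta>. j \<le> n" "length \<theta> = Suc m" and i: "i < length (map ((!) (replicate (Suc n) a)) \<theta>)"
    then have "\<theta> ! i \<in> set \<theta>" by simp
    then have "\<theta> ! i < Suc n" using a(1) by fastforce
    then have "replicate (Suc n) a ! (\<theta> ! i) = a" by (rule nth_replicate)
    then show "map ((!) (replicate (Suc n) a)) \<theta> ! i = replicate (Suc m) a ! i"
      using i a by (simp del: replicate_Suc)
  qed simp
qed

lemma mono_rep: "a \<le> k \<Longrightarrow> mono_map n k (replicate (Suc n) a)"
  by (auto simp: mono_map_def)

lemma sset_cells: "is_sset X \<Longrightarrow> mono_map m n \<theta> \<Longrightarrow> x \<in> cells X n \<Longrightarrow> act X n \<theta> x \<in> cells X m"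
proof -
  assume a: "is_sset X" "mono_map m n \<theta>" "x \<in> cells X n"
  have "\<forall>n m \<theta> x. mono_map m n \<theta> \<and> x \<in> cells X n \<longrightarrow> act X n \<theta> x \<in> cells X m"
    using a(1) unfolding is_sset_def by (rule conjunct1)
  then show ?thesis using a(2,3) by blast
qed

definition dmW :: "'x sset \<Rightarrow> 'y sset \<Rightarrow> 'z sset \<Rightarrow> ('y + ('x \<times> nat list) + 'z) sset" where
  "dmW X Y Z = coprod2_sset Y (coprod2_sset (prod2_sset X (stdsimplex 1)) Z)"

definition dmR :: "'x sset \<Rightarrow> (nat \<Rightarrow> 'x \<Rightarrow> 'y) \<Rightarrow> (nat \<Rightarrow> 'x \<Rightarrow> 'z) \<Rightarrow> nat \<Rightarrow> (('y + ('x \<times> nat list) + 'z) \<times> ('y + ('x \<times> nat list) + 'z)) set" where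
  "dmR X f g = (\<lambda>n. {(Inr (Inl (x, replicate (Suc n) 0)), Inl (f n x)) | x. x \<in> cells X n}
          \<union> {(Inr (Inl (x, replicate (Suc n) 1)), Inr (Inr (g n x))) | x. x \<in> cells X n})"

lemma dm_eq: "dmcyl_sset X Y Z f g = quot_sset (dmW X Y Z) (dmR X f g)"
  unfolding dmcyl_sset_def dmW_def dmR_def ..

lemma dmW_act:
  "act (dmW X Y Z) n \<theta> (Inl y) = Inl (act Y n \<theta> y)"
  "act (dmW X Y Z) n \<theta> (Inr (Inl (x, l))) = Inr (Inl (act X n \<theta> x, dcomp l \<theta>))"
  "act (dmW X Y Z) n \<theta> (Inr (Inr z)) = Inr (Inr (act Z n \<theta> z))"
  by (auto simp: dmW_def coprod2_sset_def prod2_sset_def stdsimplex_def)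

lemma dmW_cells:
  "cells (dmW X Y Z) n = Inl ` cells Y n \<union> Inr ` (Inl ` (cells X n \<times> {l. mono_map n 1 l}) \<union> Inr ` cells Z n)"
  by (auto simp: dmW_def coprod2_sset_def prod2_sset_def stdsimplex_def)

lemma dmW_in:
  "y \<in> cells Y n \<Longrightarrow> Inl y \<in> cells (dmW X Y Z) n"
  "x \<in> cells X n \<Longrightarrow> mono_map n 1 l \<Longrightarrow> Inr (Inl (x, l)) \<in> cells (dmW X Y Z) n"
  "z \<in> cells Z n \<Longrightarrow> Inr (Inr z) \<in> cells (dmW X Y Z) n"
  by (auto simp: dmW_cells)

lemma dmW_cases:
  assumes "w \<in> cells (dmW X Y Z) n"
  obtains (L) y where "y \<in> cells Y n" "w = Inl y"
    | (M) x l where "x \<in> cells X n" "mono_map n 1 l" "w = Inr (Inl (x, l))"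
    | (R) z where "z \<in> cells Z n" "w = Inr (Inr z)"
  using assms unfolding dmW_cells by blast

lemma dm_qsetup:
  assumes "is_sset X" "is_sset Y" "is_sset Z" "sset_hom X Y f" "sset_hom X Z g"
  shows "qsetup (dmW X Y Z) (dmR X f g)"
proof
  fix n
  show "dmR X f g n \<subseteq> cells (dmW X Y Z) n \<times> cells (dmW X Y Z) n"
  proof
    fix p assume "p \<in> dmR X f g n"
    then consider x where "x \<in> cells X n" "p = (Inr (Inl (x, replicate (Suc n) 0)), Inl (f n x))"
      | x where "x \<in> cells X n" "p = (Inr (Inl (x, replicate (Suc n) 1)), Inr (Inr (g n x)))"
      unfolding dmR_def by blast
    then show "p \<in> cells (dmW X Y Z) n \<times> cells (dmW X Y Z) n"
    proof cases
      case 1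
      have "f n x \<in> cells Y n" using assms(4) 1 unfolding sset_hom_def by blast
      then show ?thesis using 1 mono_rep[of 0 1 n] by (simp add: dmW_in)
    next
      case 2
      have "g n x \<in> cells Z n" using assms(5) 2 unfolding sset_hom_def by blast
      then show ?thesis using 2 mono_rep[of 1 1 n] by (simp add: dmW_in)
    qed
  qed
next
  fix m n \<theta> x assume th: "mono_map m n \<theta>" and x: "x \<in> cells (dmW X Y Z) n"
  from x show "act (dmW X Y Z) n \<theta> x \<in> cells (dmW X Y Z) m"
  proof (cases rule: dmW_cases)
    case (L y) then show ?thesis using sset_cells[OF assms(2) th] by (simp add: dmW_act dmW_in)
  next
    case (M x l) then show ?thesis using sset_cells[OF assms(1) th] dcomp_mono[OF _ th]
      by (simp add: dmW_act dmW_in)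
  next
    case (R z) then show ?thesis using sset_cells[OF assms(3) th] by (simp add: dmW_act dmW_in)
  qed
next
  fix m n \<theta> a b assume th: "mono_map m n \<theta>" and ab: "(a, b) \<in> dmR X f g n"
  from ab consider x where "x \<in> cells X n" "a = Inr (Inl (x, replicate (Suc n) 0))" "b = Inl (f n x)"
      | x where "x \<in> cells X n" "a = Inr (Inl (x, replicate (Suc n) 1))" "b = Inr (Inr (g n x))"
      unfolding dmR_def by blast
  then have "(act (dmW X Y Z) n \<theta> a, act (dmW X Y Z) n \<theta> b) \<in> dmR X f g m"
  proof cases
    case 1
    have "f m (act X n \<theta> x) = act Y n \<theta> (f n x)" using assms(4) th 1 unfolding sset_hom_def by blast
    moreover have "act X n \<theta> x \<in> cells X m" using sset_cells[OF assms(1) th 1(1)] .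
    ultimately show ?thesis using 1 unfolding dmR_def
      by (simp add: dmW_act dcomp_rep[OF th] del: replicate_Suc)
  next
    case 2
    have "g m (act X n \<theta> x) = act Z n \<theta> (g n x)" using assms(5) th 2 unfolding sset_hom_def by blast
    moreover have "act X n \<theta> x \<in> cells X m" using sset_cells[OF assms(1) th 2(1)] .
    ultimately show ?thesis using 2 unfolding dmR_def
      by (simp add: dmW_act dcomp_rep[OF th] del: replicate_Suc)
  qed
  then show "(act (dmW X Y Z) n \<theta> a, act (dmW X Y Z) n \<theta> b)
       \<in> equiv_closure_on (cells (dmW X Y Z) m) (dmR X f g m)" using ec_gen by blast
qed


definition dmphi :: "(nat \<Rightarrow> 'x \<Rightarrow> 'y) \<Rightarrow> (nat \<Rightarrow> 'x \<Rightarrow> 'z) \<Rightarrow> ('y + ('x \<times> nat list) + 'z) \<Rightarrow> 'y + 'z" where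
  "dmphi f g w = (case w of Inl y \<Rightarrow> Inl y
      | Inr (Inl (x, l)) \<Rightarrow> (if l = [0] then Inl (f 0 x) else Inr (g 0 x))
      | Inr (Inr z) \<Rightarrow> Inr z)"

definition dmT :: "'y sset \<Rightarrow> 'z sset \<Rightarrow> (('y + 'z) \<times> ('y + 'z)) set" where
  "dmT Y Z = {(Inl a, Inl b) | a b. (a, b) \<in> erel Y} \<union> {(Inr a, Inr b) | a b. (a, b) \<in> erel Z}
     \<union> {(Inl a, Inr b) | a b. True}"

definition dmP :: "'y sset \<Rightarrow> 'z sset \<Rightarrow> 'y + 'z \<Rightarrow> 'y + 'z \<Rightarrow> bool" where
  "dmP Y Z p q = (case p of Inl a \<Rightarrow> (case q of Inl b \<Rightarrow> (a, b) \<in> (erel Y)\<^sup>+ | Inr b \<Rightarrow> True)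
                           | Inr a \<Rightarrow> (case q of Inl b \<Rightarrow> False | Inr b \<Rightarrow> (a, b) \<in> (erel Z)\<^sup>+))"

lemma dmT_trancl:
  assumes "(p, q) \<in> (dmT Y Z)\<^sup>+" shows "dmP Y Z p q"
  using assms
proof (induction rule: trancl_induct)
  case (base y) then show ?case by (auto simp: dmT_def dmP_def)
next
  case (step y z)
  from step(2) consider a b where "(a, b) \<in> erel Y" "y = Inl a" "z = Inl b"
    | a b where "(a, b) \<in> erel Z" "y = Inr a" "z = Inr b"
    | a b where "y = Inl a" "z = Inr b" unfolding dmT_def by blast
  then show ?case
  proof cases
    case 1 then show ?thesis using step(3) by (cases p) (auto simp: dmP_def intro: trancl_into_trancl)
  next
    case 2 then show ?thesis using step(3) by (cases p) (auto simp: dmP_def intro: trancl_into_trancl)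
  next
    case 3 then show ?thesis using step(3) by (cases p) (auto simp: dmP_def)
  qed
qed

lemma dmT_acyc:
  assumes "sset_acyclic Y" "sset_acyclic Z"
  shows "\<forall>v. (v, v) \<notin> (dmT Y Z)\<^sup>+"
proof (intro allI notI)
  fix v assume "(v, v) \<in> (dmT Y Z)\<^sup>+"
  then have "dmP Y Z v v" by (rule dmT_trancl)
  then show False using assms unfolding acyc_iff by (cases v) (auto simp: dmP_def)
qed

lemma mono_map_11: "mono_map 1 1 l \<Longrightarrow> l = [0,0] \<or> l = [0,1] \<or> l = [1,1]"
  using mono_map_1[of 1 l] by auto

lemma part5:
  assumes "is_sset X" "is_sset Y" "is_sset Z" "sset_acyclic Y" "sset_acyclic Z"
    "sset_hom X Y f" "sset_hom X Z g"
  shows "sset_acyclic (dmcyl_sset X Y Z f g)"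
proof -
  interpret qsetup "dmW X Y Z" "dmR X f g" using dm_qsetup assms by blast
  have hY: "f m (act X n \<theta> x) = act Y n \<theta> (f n x)" "f n x \<in> cells Y n"
    if "mono_map m n \<theta>" "x \<in> cells X n" for m n \<theta> x
    using assms(6) that unfolding sset_hom_def by blast+
  have hZ: "g m (act X n \<theta> x) = act Z n \<theta> (g n x)" "g n x \<in> cells Z n"
    if "mono_map m n \<theta>" "x \<in> cells X n" for m n \<theta> x
    using assms(7) that unfolding sset_hom_def by blast+
  have refl1: "(w, w) \<in> EE 1" if "w \<in> cells (dmW X Y Z) 1" for w
    using EE_equiv[of 1] that by (auto simp: equiv_def refl_on_def)
  have Ecase: "(dmphi f g (Inl (act Y 1 [0] e)), dmphi f g (Inl (act Y 1 [1] e))) \<in> dmT Y Z"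
    if e: "e \<in> cells Y 1" and w: "(w, Inl e) \<in> EE 1"
      and nd: "\<forall>v \<in> cells (dmW X Y Z) 0. (w, act (dmW X Y Z) 0 [0,0] v) \<notin> EE 1" for e w
  proof -
    have "e \<notin> act Y 0 [0,0] ` cells Y 0"
    proof
      assume "e \<in> act Y 0 [0,0] ` cells Y 0"
      then obtain v where v: "v \<in> cells Y 0" "e = act Y 0 [0,0] v" by blast
      then have "Inl e = act (dmW X Y Z) 0 [0,0] (Inl v)" by (simp add: dmW_act)
      then show False using nd dmW_in(1)[OF v(1), of X Z] w by auto
    qed
    then have "(act Y 1 [0] e, act Y 1 [1] e) \<in> erel Y" using e by (auto simp: erel_def nondeg_edges_def)
    then show ?thesis by (simp add: dmphi_def dmT_def)
  qed
  have EcaseZ: "(dmphi f g (Inr (Inr (act Z 1 [0] e))), dmphi f g (Inr (Inr (act Z 1 [1] e)))) \<in> dmT Y Z"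
    if e: "e \<in> cells Z 1" and w: "(w, Inr (Inr e)) \<in> EE 1"
      and nd: "\<forall>v \<in> cells (dmW X Y Z) 0. (w, act (dmW X Y Z) 0 [0,0] v) \<notin> EE 1" for e w
  proof -
    have "e \<notin> act Z 0 [0,0] ` cells Z 0"
    proof
      assume "e \<in> act Z 0 [0,0] ` cells Z 0"
      then obtain v where v: "v \<in> cells Z 0" "e = act Z 0 [0,0] v" by blast
      then have "Inr (Inr e) = act (dmW X Y Z) 0 [0,0] (Inr (Inr v))" by (simp add: dmW_act)
      then show False using nd dmW_in(3)[OF v(1), of X Y] w by auto
    qed
    then have "(act Z 1 [0] e, act Z 1 [1] e) \<in> erel Z" using e by (auto simp: erel_def nondeg_edges_def)
    then show ?thesis by (simp add: dmphi_def dmT_def)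
  qed
  have inv: "\<forall>(a, b)\<in>dmR X f g 0. dmphi f g a = dmphi f g b"
    by (auto simp: dmR_def dmphi_def)
  show ?thesis unfolding dm_eq
  proof (rule quot_acyclic[OF inv dmT_acyc[OF assms(4,5)]])
    fix w assume w: "w \<in> cells (dmW X Y Z) 1"
      and nd: "\<forall>v\<in>cells (dmW X Y Z) 0. (w, act (dmW X Y Z) 0 [0, 0] v) \<notin> EE 1"
    from w show "(dmphi f g (act (dmW X Y Z) 1 [0] w), dmphi f g (act (dmW X Y Z) 1 [1] w)) \<in> dmT Y Z"
    proof (cases rule: dmW_cases)
      case (L e)
      then show ?thesis using Ecase[OF L(1) _ nd] refl1[OF w] by (simp add: dmW_act)
    next
      case (R e)
      then show ?thesis using EcaseZ[OF R(1) _ nd] refl1[OF w] by (simp add: dmW_act)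
    next
      case (M x l)
      from mono_map_11[OF M(2)] consider "l = [0,0]" | "l = [0,1]" | "l = [1,1]" by blast
      then show ?thesis
      proof cases
        case 1
        have "(w, Inl (f 1 x)) \<in> dmR X f g 1" using M 1 by (auto simp: dmR_def numeral_2_eq_2)
        then have "(w, Inl (f 1 x)) \<in> EE 1" using ec_gen by blast
        from Ecase[OF hY(2)[OF mm0 M(1)] this nd]
        show ?thesis using M 1 hY(1)[OF mm0 M(1)] hY(1)[OF mm1 M(1)]
          by (simp add: dmW_act dcomp_def dmphi_def)
      next
        case 3
        have "(w, Inr (Inr (g 1 x))) \<in> dmR X f g 1" using M 3 by (auto simp: dmR_def numeral_2_eq_2)
        then have "(w, Inr (Inr (g 1 x))) \<in> EE 1" using ec_gen by blast
        from EcaseZ[OF hZ(2)[OF mm0 M(1)] this nd]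
        show ?thesis using M 3 hZ(1)[OF mm0 M(1)] hZ(1)[OF mm1 M(1)]
          by (simp add: dmW_act dcomp_def dmphi_def)
      next
        case 2
        then show ?thesis using M by (simp add: dmW_act dcomp_def dmphi_def dmT_def)
      qed
    qed
  qed
qed



locale fcol =
  fixes C :: "('o, 'm) small_cat" and D :: "'o \<Rightarrow> 'a sset" and F :: "'m \<Rightarrow> nat \<Rightarrow> 'a \<Rightarrow> 'a"
  assumes cat: "is_cat C" and filt: "filtered_cat C" and diag: "sset_diagram C D F"
begin

abbreviation "cobj \<equiv> c_obj C"
abbreviation "carr \<equiv> c_arr C"
abbreviation "cdom \<equiv> c_dom C"
abbreviation "ccod \<equiv> c_cod C"
abbreviation "cmp \<equiv> c_comp C"

lemma arr_dc: "u \<in> carr \<Longrightarrow> cdom u \<in> cobj" "u \<in> carr \<Longrightarrow> ccod u \<in> cobj"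
  using cat unfolding is_cat_def by blast+

lemma id_arr: "i \<in> cobj \<Longrightarrow> c_id C i \<in> carr \<and> cdom (c_id C i) = i \<and> ccod (c_id C i) = i"
  using cat unfolding is_cat_def by blast

lemma cmp_arr: "u \<in> carr \<Longrightarrow> v \<in> carr \<Longrightarrow> ccod u = cdom v \<Longrightarrow>
   cmp v u \<in> carr \<and> cdom (cmp v u) = cdom u \<and> ccod (cmp v u) = ccod v"
  using cat unfolding is_cat_def by blast

lemma Dsset: "i \<in> cobj \<Longrightarrow> is_sset (D i)"
  using diag unfolding sset_diagram_def by blast

lemma Fhom: "u \<in> carr \<Longrightarrow> sset_hom (D (cdom u)) (D (ccod u)) (F u)"
  using diag unfolding sset_diagram_def by blast

lemma Fcells: "u \<in> carr \<Longrightarrow> x \<in> cells (D (cdom u)) n \<Longrightarrow> F u n x \<in> cells (D (ccod u)) n"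
  using Fhom unfolding sset_hom_def by blast

lemma Fact: "u \<in> carr \<Longrightarrow> mono_map m n \<theta> \<Longrightarrow> x \<in> cells (D (cdom u)) n \<Longrightarrow>
   F u m (act (D (cdom u)) n \<theta> x) = act (D (ccod u)) n \<theta> (F u n x)"
  using Fhom unfolding sset_hom_def by blast

lemma Fid: "i \<in> cobj \<Longrightarrow> x \<in> cells (D i) n \<Longrightarrow> F (c_id C i) n x = x"
  using diag unfolding sset_diagram_def by blast

lemma Fcmp: "u \<in> carr \<Longrightarrow> v \<in> carr \<Longrightarrow> ccod u = cdom v \<Longrightarrow> x \<in> cells (D (cdom u)) n \<Longrightarrow>
   F (cmp v u) n x = F v n (F u n x)"
  using diag unfolding sset_diagram_def by blast

lemma filt1: "i \<in> cobj \<Longrightarrow> j \<in> cobj \<Longrightarrow>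
  \<exists>u\<in>carr. \<exists>v\<in>carr. cdom u = i \<and> cdom v = j \<and> ccod u = ccod v"
  using filt unfolding filtered_cat_def by metis

lemma filt2: "u \<in> carr \<Longrightarrow> v \<in> carr \<Longrightarrow> cdom u = cdom v \<Longrightarrow> ccod u = ccod v \<Longrightarrow>
  \<exists>w\<in>carr. cdom w = ccod u \<and> cmp w u = cmp w v"
  using filt unfolding filtered_cat_def by blast

abbreviation "W \<equiv> coprod_sset cobj D"
definition "RR n = {((cdom u, x), (ccod u, F u n x)) | u x. u \<in> carr \<and> x \<in> cells (D (cdom u)) n}"

lemma colim_eq: "colim_sset C D F = quot_sset W RR"
  unfolding colim_sset_def RR_def ..

lemma Wcells: "cells W n = Sigma cobj (\<lambda>i. cells (D i) n)"
  by (simp add: coprod_sset_def)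

lemma Wact: "act W n \<theta> (i, x) = (i, act (D i) n \<theta> x)"
  by (simp add: coprod_sset_def)

lemma qs: "qsetup W RR"
proof
  fix n show "RR n \<subseteq> cells W n \<times> cells W n"
    unfolding RR_def Wcells using arr_dc Fcells by auto
next
  fix m n \<theta> x assume th: "mono_map m n \<theta>" and x: "x \<in> cells W n"
  then show "act W n \<theta> x \<in> cells W m"
    unfolding Wcells using sset_cells[OF Dsset th] by (cases x) (auto simp: Wact)
next
  fix m n \<theta> a b assume th: "mono_map m n \<theta>" and ab: "(a, b) \<in> RR n"
  then obtain u x where u: "u \<in> carr" "x \<in> cells (D (cdom u)) n" "a = (cdom u, x)" "b = (ccod u, F u n x)"
    unfolding RR_def by blast
  have "(act W n \<theta> a, act W n \<theta> b) \<in> RR m"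
    using u Fact[OF u(1) th u(2)] sset_cells[OF Dsset[OF arr_dc(1)[OF u(1)]] th u(2)]
    unfolding RR_def by (auto simp: Wact)
  then show "(act W n \<theta> a, act W n \<theta> b) \<in> equiv_closure_on (cells W m) (RR m)" using ec_gen by blast
qed

sublocale q: qsetup W RR by (rule qs)

definition join :: "nat \<Rightarrow> 'o \<times> 'a \<Rightarrow> 'o \<times> 'a \<Rightarrow> bool" where
  "join n p q \<longleftrightarrow> (\<exists>u\<in>carr. \<exists>v\<in>carr. cdom u = fst p \<and> cdom v = fst q \<and> ccod u = ccod v \<and>
      F u n (snd p) = F v n (snd q))"

lemma join_refl: "p \<in> cells W n \<Longrightarrow> join n p p"
  unfolding join_def Wcells using id_arr Fid by (cases p) fastforce

lemma join_sym: "join n p q \<Longrightarrow> join n q p"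
  unfolding join_def by metis

lemma join_R: "(p, q) \<in> RR n \<Longrightarrow> join n p q"
proof -
  assume "(p, q) \<in> RR n"
  then obtain u x where u: "u \<in> carr" "x \<in> cells (D (cdom u)) n" "p = (cdom u, x)" "q = (ccod u, F u n x)"
    unfolding RR_def by blast
  have i: "c_id C (ccod u) \<in> carr" "cdom (c_id C (ccod u)) = ccod u" "ccod (c_id C (ccod u)) = ccod u"
    using id_arr arr_dc(2)[OF u(1)] by auto
  have "F (c_id C (ccod u)) n (F u n x) = F u n x"
    using Fid arr_dc(2)[OF u(1)] Fcells[OF u(1,2)] by blast
  then show "join n p q" unfolding join_def using u i by (intro bexI[OF _ u(1)] bexI[OF _ i(1)]) auto
qed

lemma join_trans:
  assumes "join n p q" "join n q r" "p \<in> cells W n" "q \<in> cells W n" "r \<in> cells W n"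
  shows "join n p r"
proof -
  obtain u1 v1 where uv1: "u1 \<in> carr" "v1 \<in> carr" "cdom u1 = fst p" "cdom v1 = fst q" "ccod u1 = ccod v1"
    "F u1 n (snd p) = F v1 n (snd q)" using assms(1) unfolding join_def by blast
  obtain u2 v2 where uv2: "u2 \<in> carr" "v2 \<in> carr" "cdom u2 = fst q" "cdom v2 = fst r" "ccod u2 = ccod v2"
    "F u2 n (snd q) = F v2 n (snd r)" using assms(2) unfolding join_def by blast
  have pc: "snd p \<in> cells (D (fst p)) n" "snd q \<in> cells (D (fst q)) n" "snd r \<in> cells (D (fst r)) n"
    using assms(3-5) unfolding Wcells by auto
  obtain a b where ab: "a \<in> carr" "b \<in> carr" "cdom a = ccod v1" "cdom b = ccod u2" "ccod a = ccod b"
    using filt1[OF arr_dc(2)[OF uv1(2)] arr_dc(2)[OF uv2(1)]] by blast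
  have c1: "cmp a v1 \<in> carr" "cdom (cmp a v1) = fst q" "ccod (cmp a v1) = ccod a"
    using cmp_arr[OF uv1(2) ab(1)] ab uv1 by auto
  have c2: "cmp b u2 \<in> carr" "cdom (cmp b u2) = fst q" "ccod (cmp b u2) = ccod a"
    using cmp_arr[OF uv2(1) ab(2)] ab uv2 by auto
  obtain w where w: "w \<in> carr" "cdom w = ccod a" "cmp w (cmp a v1) = cmp w (cmp b u2)"
    using filt2[OF c1(1) c2(1)] c1 c2 by auto
  have c3: "cmp a u1 \<in> carr" "cdom (cmp a u1) = fst p" "ccod (cmp a u1) = ccod a"
    using cmp_arr[OF uv1(1) ab(1)] ab uv1 by auto
  have c4: "cmp b v2 \<in> carr" "cdom (cmp b v2) = fst r" "ccod (cmp b v2) = ccod a"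
    using cmp_arr[OF uv2(2) ab(2)] ab uv2 by auto
  have c5: "cmp w (cmp a u1) \<in> carr" "cdom (cmp w (cmp a u1)) = fst p" "ccod (cmp w (cmp a u1)) = ccod w"
    using cmp_arr[OF c3(1) w(1)] c3 w by auto
  have c6: "cmp w (cmp b v2) \<in> carr" "cdom (cmp w (cmp b v2)) = fst r" "ccod (cmp w (cmp b v2)) = ccod w"
    using cmp_arr[OF c4(1) w(1)] c4 w by auto
  have "F (cmp w (cmp a u1)) n (snd p) = F w n (F a n (F u1 n (snd p)))"
    using Fcmp[OF c3(1) w(1)] c3 w Fcmp[OF uv1(1) ab(1)] ab uv1 pc by simp
  also have "\<dots> = F w n (F a n (F v1 n (snd q)))" using uv1(6) by simp
  also have "\<dots> = F (cmp w (cmp a v1)) n (snd q)"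
    using Fcmp[OF c1(1) w(1)] c1 w Fcmp[OF uv1(2) ab(1)] ab uv1 pc by simp
  also have "\<dots> = F (cmp w (cmp b u2)) n (snd q)" using w(3) by simp
  also have "\<dots> = F w n (F b n (F u2 n (snd q)))"
    using Fcmp[OF c2(1) w(1)] c2 w Fcmp[OF uv2(1) ab(2)] ab uv2 pc by simp
  also have "\<dots> = F w n (F b n (F v2 n (snd r)))" using uv2(6) by simp
  also have "\<dots> = F (cmp w (cmp b v2)) n (snd r)"
    using Fcmp[OF c4(1) w(1)] c4 w Fcmp[OF uv2(2) ab(2)] ab uv2 pc by simp
  finally have eq: "F (cmp w (cmp a u1)) n (snd p) = F (cmp w (cmp b v2)) n (snd r)" .
  show ?thesis unfolding join_def
    by (rule bexI[OF _ c5(1)], rule bexI[OF _ c6(1)]) (simp add: c5 c6 eq)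
qed

lemma EE_join: "(p, q) \<in> q.EE n \<Longrightarrow> join n p q"
proof -
  assume "(p, q) \<in> q.EE n"
  then consider "(p, q) \<in> Id_on (cells W n)" | "(p, q) \<in> (RR n \<union> (RR n)\<inverse>)\<^sup>+"
    unfolding equiv_closure_on_def by blast
  then show "join n p q"
  proof cases
    case 1 then show ?thesis using join_refl by auto
  next
    case 2
    have sub: "RR n \<union> (RR n)\<inverse> \<subseteq> cells W n \<times> cells W n" using q.HR by auto
    from 2 show ?thesis
    proof (induction rule: trancl_induct)
      case (base y) then show ?case using join_R join_sym by blast
    next
      case (step y z)
      have "join n y z" using step(2) join_R join_sym by blast
      moreover have "p \<in> cells W n" "y \<in> cells W n" using step(1) trancl_subset_Sigma[OF sub] by auto
      moreover have "z \<in> cells W n" using step(2) sub by auto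
      ultimately show ?case using join_trans step(3) by blast
    qed
  qed
qed


lemma join_same:
  assumes "join n (i, a) (i, b)" "a \<in> cells (D i) n" "b \<in> cells (D i) n"
  shows "\<exists>z\<in>carr. cdom z = i \<and> F z n a = F z n b"
proof -
  obtain u v where uv: "u \<in> carr" "v \<in> carr" "cdom u = i" "cdom v = i" "ccod u = ccod v" "F u n a = F v n b"
    using assms(1) unfolding join_def by auto
  obtain w where w: "w \<in> carr" "cdom w = ccod u" "cmp w u = cmp w v" using filt2[OF uv(1,2)] uv by auto
  have c: "cmp w u \<in> carr" "cdom (cmp w u) = i" using cmp_arr[OF uv(1) w(1)] w uv by auto
  have "F (cmp w u) n a = F w n (F u n a)" using Fcmp[OF uv(1) w(1)] w uv assms(2) by simp
  also have "\<dots> = F w n (F v n b)" using uv by simp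
  also have "\<dots> = F (cmp w v) n b" using Fcmp[OF uv(2) w(1)] w uv assms(3) by simp
  also have "\<dots> = F (cmp w u) n b" using w by simp
  finally show ?thesis using c by blast
qed

lemma cls_eq: "(p, q) \<in> q.EE n \<Longrightarrow> q.EE n `` {p} = q.EE n `` {q}"
  by (rule equiv_class_eq[OF q.EE_equiv])

lemma cls_eqD: "q.EE n `` {p} = q.EE n `` {q} \<Longrightarrow> p \<in> cells W n \<Longrightarrow> q \<in> cells W n \<Longrightarrow> (p, q) \<in> q.EE n"
  using eq_equiv_class_iff[OF q.EE_equiv, of p n q] by simp

lemma gen_cls: "u \<in> carr \<Longrightarrow> x \<in> cells (D (cdom u)) n \<Longrightarrow> (( cdom u, x), (ccod u, F u n x)) \<in> q.EE n"
proof -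
  assume a: "u \<in> carr" "x \<in> cells (D (cdom u)) n"
  have "((cdom u, x), (ccod u, F u n x)) \<in> RR n" unfolding RR_def using a by blast
  then show ?thesis using ec_gen by blast
qed

lemma path_img:
  assumes "u \<in> carr" "(x, y) \<in> (arel (D (cdom u)))\<^sup>*"
  shows "(F u 0 x, F u 0 y) \<in> (arel (D (ccod u)))\<^sup>*"
  using assms(2)
proof (induction rule: rtrancl_induct)
  case base then show ?case by simp
next
  case (step y z)
  then obtain e where e: "e \<in> cells (D (cdom u)) 1" "y = act (D (cdom u)) 1 [0] e" "z = act (D (cdom u)) 1 [1] e"
    unfolding arel_def by blast
  have "(F u 0 y, F u 0 z) \<in> arel (D (ccod u))"
    using e Fact[OF assms(1) mm0 e(1)] Fact[OF assms(1) mm1 e(1)] Fcells[OF assms(1) e(1)]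
    unfolding arel_def by auto
  with step(3) show ?case by (rule rtrancl_into_rtrancl)
qed

lemma edge_rep:
  assumes "(c0, c1) \<in> erel (quot_sset W RR)"
  obtains i e where "i \<in> cobj" "e \<in> cells (D i) 1"
    "c0 = q.EE 0 `` {(i, act (D i) 1 [0] e)}" "c1 = q.EE 0 `` {(i, act (D i) 1 [1] e)}"
    "\<forall>v \<in> cells W 0. ((i, e), act W 0 [0,0] v) \<notin> q.EE 1"
proof -
  from q.qedge[OF assms] obtain w where w: "w \<in> cells W 1" "c0 = q.EE 0 `` {act W 1 [0] w}"
    "c1 = q.EE 0 `` {act W 1 [1] w}" "\<forall>v \<in> cells W 0. (w, act W 0 [0,0] v) \<notin> q.EE 1" by blast
  obtain i e where "w = (i, e)" by force
  then show ?thesis using that w unfolding Wcells by (auto simp: Wact)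
qed

lemma Lstar:
  assumes "(d, c) \<in> (erel (quot_sset W RR))\<^sup>*" "k \<in> cobj" "a \<in> cells (D k) 0" "d = q.EE 0 `` {(k, a)}"
  shows "\<exists>u\<in>carr. \<exists>b. cdom u = k \<and> b \<in> cells (D (ccod u)) 0 \<and>
           (F u 0 a, b) \<in> (arel (D (ccod u)))\<^sup>* \<and> c = q.EE 0 `` {(ccod u, b)}"
  using assms(1)
proof (induction rule: rtrancl_induct)
  case base
  have "c_id C k \<in> carr" "cdom (c_id C k) = k" "ccod (c_id C k) = k" using id_arr[OF assms(2)] by auto
  moreover have "F (c_id C k) 0 a = a" using Fid[OF assms(2,3)] .
  ultimately show ?case using assms(3,4) by (intro bexI[of _ "c_id C k"] exI[of _ a]) auto
next
  case (step y z)
  from step(3) obtain u b where u: "u \<in> carr" "cdom u = k" "b \<in> cells (D (ccod u)) 0"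
    "(F u 0 a, b) \<in> (arel (D (ccod u)))\<^sup>*" "y = q.EE 0 `` {(ccod u, b)}" by blast
  from edge_rep[OF step(2)] obtain i e where ie: "i \<in> cobj" "e \<in> cells (D i) 1"
    "y = q.EE 0 `` {(i, act (D i) 1 [0] e)}" "z = q.EE 0 `` {(i, act (D i) 1 [1] e)}" by blast
  have d1: "act (D i) 1 [0] e \<in> cells (D i) 0" "act (D i) 1 [1] e \<in> cells (D i) 0"
    using sset_cells[OF Dsset[OF ie(1)] mm0 ie(2)] sset_cells[OF Dsset[OF ie(1)] mm1 ie(2)] by auto
  have "((ccod u, b), (i, act (D i) 1 [0] e)) \<in> q.EE 0"
    using cls_eqD[of 0 "(ccod u, b)" "(i, act (D i) 1 [0] e)"] u(5) ie(3) d1 u(3) arr_dc[OF u(1)] ie(1)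
    unfolding Wcells by auto
  then have "join 0 (ccod u, b) (i, act (D i) 1 [0] e)" by (rule EE_join)
  then obtain u' v' where uv: "u' \<in> carr" "v' \<in> carr" "cdom u' = ccod u" "cdom v' = i" "ccod u' = ccod v'"
    "F u' 0 b = F v' 0 (act (D i) 1 [0] e)" unfolding join_def by auto
  have U: "cmp u' u \<in> carr" "cdom (cmp u' u) = k" "ccod (cmp u' u) = ccod u'"
    using cmp_arr[OF u(1) uv(1)] uv u by auto
  have FU: "F (cmp u' u) 0 a = F u' 0 (F u 0 a)" using Fcmp[OF u(1) uv(1)] uv u assms(3) by simp
  have p1: "(F u' 0 (F u 0 a), F u' 0 b) \<in> (arel (D (ccod u')))\<^sup>*"
    using path_img[OF uv(1)] u(4) uv(3) by simp
  have eF: "F v' 1 e \<in> cells (D (ccod v')) 1" using Fcells[OF uv(2)] ie(2) uv(4) by simp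
  have "(act (D (ccod v')) 1 [0] (F v' 1 e), act (D (ccod v')) 1 [1] (F v' 1 e)) \<in> arel (D (ccod v'))"
    using eF unfolding arel_def by blast
  moreover have "act (D (ccod v')) 1 [0] (F v' 1 e) = F u' 0 b"
    using Fact[OF uv(2) mm0] ie(2) uv(4,6) by simp
  moreover have "act (D (ccod v')) 1 [1] (F v' 1 e) = F v' 0 (act (D i) 1 [1] e)"
    using Fact[OF uv(2) mm1] ie(2) uv(4) by simp
  ultimately have p2: "(F u' 0 b, F v' 0 (act (D i) 1 [1] e)) \<in> arel (D (ccod u'))" using uv(5) by simp
  have b'c: "F v' 0 (act (D i) 1 [1] e) \<in> cells (D (ccod u')) 0" using Fcells[OF uv(2)] d1(2) uv(4,5) by simp
  have "z = q.EE 0 `` {(ccod v', F v' 0 (act (D i) 1 [1] e))}"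
    using ie(4) cls_eq[OF gen_cls[OF uv(2)]] d1(2) uv(4) by simp
  then show ?case using U FU p1 p2 b'c uv(5)
    by (intro bexI[OF _ U(1)] exI[of _ "F v' 0 (act (D i) 1 [1] e)"]) (auto intro: rtrancl_into_rtrancl)
qed

lemma colim_acyclic:
  assumes "\<forall>i\<in>cobj. sset_acyclic (D i)"
  shows "sset_acyclic (colim_sset C D F)"
  unfolding colim_eq acyc_iff
proof (intro allI notI)
  fix c assume "(c, c) \<in> (erel (quot_sset W RR))\<^sup>+"
  then obtain y where cy: "(c, y) \<in> erel (quot_sset W RR)" "(y, c) \<in> (erel (quot_sset W RR))\<^sup>*"
    by (blast dest: tranclD)
  from edge_rep[OF cy(1)] obtain i e where ie: "i \<in> cobj" "e \<in> cells (D i) 1"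
    "c = q.EE 0 `` {(i, act (D i) 1 [0] e)}" "y = q.EE 0 `` {(i, act (D i) 1 [1] e)}"
    "\<forall>v \<in> cells W 0. ((i, e), act W 0 [0,0] v) \<notin> q.EE 1" by blast
  have d1: "act (D i) 1 [0] e \<in> cells (D i) 0" "act (D i) 1 [1] e \<in> cells (D i) 0"
    using sset_cells[OF Dsset[OF ie(1)] mm0 ie(2)] sset_cells[OF Dsset[OF ie(1)] mm1 ie(2)] by auto
  from Lstar[OF cy(2) ie(1) d1(2) ie(4)] obtain u b where u: "u \<in> carr" "cdom u = i"
    "b \<in> cells (D (ccod u)) 0" "(F u 0 (act (D i) 1 [1] e), b) \<in> (arel (D (ccod u)))\<^sup>*"
    "c = q.EE 0 `` {(ccod u, b)}" by blast
  let ?m = "ccod u"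
  have m: "?m \<in> cobj" using arr_dc(2)[OF u(1)] .
  have Fd1: "F u 0 (act (D i) 1 [0] e) \<in> cells (D ?m) 0" using Fcells[OF u(1)] d1(1) u(2) by simp
  have "c = q.EE 0 `` {(?m, F u 0 (act (D i) 1 [0] e))}"
    using ie(3) cls_eq[OF gen_cls[OF u(1)]] d1(1) u(2) by simp
  then have ceq: "q.EE 0 `` {(?m, b)} = q.EE 0 `` {(?m, F u 0 (act (D i) 1 [0] e))}" using u(5) by simp
  have mem: "(?m, b) \<in> cells W 0" "(?m, F u 0 (act (D i) 1 [0] e)) \<in> cells W 0"
    using u(3) Fd1 m unfolding Wcells by auto
  have "((?m, b), (?m, F u 0 (act (D i) 1 [0] e))) \<in> q.EE 0"
    using cls_eqD[OF ceq mem] .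
  then have "join 0 (?m, b) (?m, F u 0 (act (D i) 1 [0] e))" by (rule EE_join)
  from join_same[OF this u(3) Fd1] obtain z where z: "z \<in> carr" "cdom z = ?m"
    "F z 0 b = F z 0 (F u 0 (act (D i) 1 [0] e))" by blast
  let ?k = "ccod z"
  have k: "?k \<in> cobj" using arr_dc(2)[OF z(1)] .
  have eu: "F u 1 e \<in> cells (D ?m) 1" using Fcells[OF u(1)] ie(2) u(2) by simp
  let ?E = "F z 1 (F u 1 e)"
  have E: "?E \<in> cells (D ?k) 1" using Fcells[OF z(1)] eu z(2) by simp
  have E0: "act (D ?k) 1 [0] ?E = F z 0 b"
    using Fact[OF z(1) mm0] eu z(2,3) Fact[OF u(1) mm0] ie(2) u(2) by simp
  have E1: "act (D ?k) 1 [1] ?E = F z 0 (F u 0 (act (D i) 1 [1] e))"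
    using Fact[OF z(1) mm1] eu z(2) Fact[OF u(1) mm1] ie(2) u(2) by simp
  have path: "(act (D ?k) 1 [1] ?E, act (D ?k) 1 [0] ?E) \<in> (arel (D ?k))\<^sup>*"
    using path_img[OF z(1)] u(4) z(2) E0 E1 by simp
  have nd: "?E \<in> nondeg_edges (D ?k)"
  proof -
    have "?E \<notin> act (D ?k) 0 [0,0] ` cells (D ?k) 0"
    proof
      assume "?E \<in> act (D ?k) 0 [0,0] ` cells (D ?k) 0"
      then obtain v where v: "v \<in> cells (D ?k) 0" "?E = act (D ?k) 0 [0,0] v" by blast
      have "((i, e), (?m, F u 1 e)) \<in> q.EE 1" using gen_cls[OF u(1)] ie(2) u(2) by simp
      moreover have "((?m, F u 1 e), (?k, ?E)) \<in> q.EE 1" using gen_cls[OF z(1)] eu z(2) by simp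
      moreover have tr: "trans (q.EE 1)" using q.EE_equiv[of 1] by (simp add: equiv_def)
      ultimately have "((i, e), (?k, ?E)) \<in> q.EE 1" by (meson transD)
      moreover have "(?k, ?E) = act W 0 [0,0] (?k, v)" using v by (simp add: Wact)
      moreover have "(?k, v) \<in> cells W 0" using v k unfolding Wcells by simp
      ultimately show False using ie(5) by auto
    qed
    then show ?thesis using E unfolding nondeg_edges_def by simp
  qed
  have "is_sset (D ?k)" using Dsset[OF k] .
  moreover have "sset_acyclic (D ?k)" using assms k by blast
  ultimately have "\<forall>e \<in> nondeg_edges (D ?k). (act (D ?k) 1 [1] e, act (D ?k) 1 [0] e) \<notin> (arel (D ?k))\<^sup>*"
    using acyc_iff2 by blast
  then show False using nd path by blast
qed

end

theorem mainTheorem1: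
  shows "(\<forall>n::nat. sset_acyclic (stdsimplex n))
   \<and> (\<forall>(X::'a sset) Y. is_sset X \<and> sset_acyclic X \<and> sub_sset Y X \<longrightarrow> sset_acyclic Y)
   \<and> (\<forall>(I::'i set) (X::'i \<Rightarrow> 'b sset).
        (\<forall>i\<in>I. is_sset (X i) \<and> sset_acyclic (X i)) \<longrightarrow> sset_acyclic (prod_sset I X))
   \<and> (\<forall>(C::('o, 'm) small_cat) (D::'o \<Rightarrow> 'c sset) F.
        is_cat C \<and> sset_diagram C D F \<and> (\<forall>i\<in>c_obj C. sset_acyclic (D i))
        \<longrightarrow> sset_acyclic (lim_sset C D F))
   \<and> (\<forall>(I::'j set) (X::'j \<Rightarrow> 'd sset).
        (\<forall>i\<in>I. is_sset (X i) \<and> sset_acyclic (X i)) \<longrightarrow> sset_acyclic (coprod_sset I X))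
   \<and> (\<forall>(X::'x sset) (Y::'y sset) (Z::'z sset) f g.
        is_sset X \<and> is_sset Y \<and> is_sset Z \<and> sset_acyclic Y \<and> sset_acyclic Z \<and>
        sset_hom X Y f \<and> sset_hom X Z g \<longrightarrow> sset_acyclic (dmcyl_sset X Y Z f g))
   \<and> (\<forall>(C::('p, 'q) small_cat) (D::'p \<Rightarrow> 'e sset) F.
        is_cat C \<and> filtered_cat C \<and> sset_diagram C D F \<and> (\<forall>i\<in>c_obj C. sset_acyclic (D i))
        \<longrightarrow> sset_acyclic (colim_sset C D F))"
proof (intro conjI allI impI)
  show "sset_acyclic (stdsimplex n)" for n by (rule part1)
next
  fix X :: "'a sset" and Y assume "is_sset X \<and> sset_acyclic X \<and> sub_sset Y X"
  then show "sset_acyclic Y" using part2 by blast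
next
  fix I :: "'i set" and X :: "'i \<Rightarrow> 'b sset" assume "\<forall>i\<in>I. is_sset (X i) \<and> sset_acyclic (X i)"
  then show "sset_acyclic (prod_sset I X)" by (rule part3)
next
  fix C :: "('o, 'm) small_cat" and D :: "'o \<Rightarrow> 'c sset" and F
  assume "is_cat C \<and> sset_diagram C D F \<and> (\<forall>i\<in>c_obj C. sset_acyclic (D i))"
  then show "sset_acyclic (lim_sset C D F)" using part_lim by blast
next
  fix I :: "'j set" and X :: "'j \<Rightarrow> 'd sset" assume "\<forall>i\<in>I. is_sset (X i) \<and> sset_acyclic (X i)"
  then show "sset_acyclic (coprod_sset I X)" by (rule part4)
next
  fix X :: "'x sset" and Y :: "'y sset" and Z :: "'z sset" and f g
  assume "is_sset X \<and> is_sset Y \<and> is_sset Z \<and> sset_acyclic Y \<and> sset_acyclic Z \<and>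
        sset_hom X Y f \<and> sset_hom X Z g"
  then show "sset_acyclic (dmcyl_sset X Y Z f g)" using part5 by blast
next
  fix C :: "('p, 'q) small_cat" and D :: "'p \<Rightarrow> 'e sset" and F
  assume a: "is_cat C \<and> filtered_cat C \<and> sset_diagram C D F \<and> (\<forall>i\<in>c_obj C. sset_acyclic (D i))"
  then interpret fcol C D F by unfold_locales blast+
  show "sset_acyclic (colim_sset C D F)" using colim_acyclic a by blast
qed


end
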